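(* Let $A=(a(x),dF(x))$ and $B=(b(x),dF(x))$ be games. Then $f(p)=\exp\big(\int\log(pa(x)+(1-p)b(x))\,dF(x)\big)/e^r$ is concave on $[0,1]$.
   Context: A game is a pair $(a(x),dF(x))$ with $dF$ a probability measure on $\mathbb{R}$ and $a\ge0$ measurable with finite positive integral. A real $r$ is fixed; convention $\exp(-\infty)=0$. *)

theory Defs
  imports "HOL-Probability.Probability"
begin

definition game :: "(real \<Rightarrow> real) \<Rightarrow> real measure \<Rightarrow> bool" where
  "game a F \<longleftrightarrow> prob_space F \<and> sets F = sets borel \<and> a \<in> borel_measurable F \<and>
     (\<forall>x. 0 \<le> a x) \<and> integrable F a \<and> 0 < integral\<^sup>L F a"

text \<open>Extended-real valued integral of log g, where log 0 = -infinity: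
  (integral of the positive part) minus (integral of the negative part).\<close>
definition log_integral :: "real measure \<Rightarrow> (real \<Rightarrow> real) \<Rightarrow> ereal" where
  "log_integral F g =
     enn2ereal (\<integral>\<^sup>+ x. (if 0 < g x then ennreal (ln (g x)) else 0) \<partial>F)
   - enn2ereal (\<integral>\<^sup>+ x. (if 0 < g x then ennreal (- ln (g x)) else \<infinity>) \<partial>F)"

definition ext_exp :: "ereal \<Rightarrow> real" where
  "ext_exp e = (if e = - \<infinity> then 0 else exp (real_of_ereal e))"

end

theory Submission imports Defs
begin


lemma enn2ereal_fin: "x < \<infinity> \<Longrightarrow> enn2ereal x = ereal (enn2real x)"
proof -
  assume "x < \<infinity>"
  then have "x = ennreal (enn2real x)" by simp
  then have "enn2ereal x = enn2ereal (ennreal (enn2real x))" by (rule arg_cong)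
  also have "\<dots> = ereal (enn2real x)" using enn2ereal_ennreal[OF enn2real_nonneg] .
  finally show ?thesis .
qed

lemma P_eq:
  assumes "AE x in F. 0 < g x"
  shows "(\<integral>\<^sup>+x. (if 0 < g x then ennreal (ln (g x)) else 0) \<partial>F) = (\<integral>\<^sup>+x. ennreal (ln (g x)) \<partial>F)"
    and "(\<integral>\<^sup>+x. (if 0 < g x then ennreal (- ln (g x)) else \<infinity>) \<partial>F) = (\<integral>\<^sup>+x. ennreal (- ln (g x)) \<partial>F)"
  by (rule nn_integral_cong_AE, use assms in auto)+

lemma log_int_eq:
  assumes "AE x in F. 0 < g x" "integrable F (\<lambda>x. ln (g x))"
  shows "ext_exp (log_integral F g) = exp (\<integral>x. ln (g x) \<partial>F)"
proof -
  have I: "(\<integral>x. ln (g x) \<partial>F) = enn2real (\<integral>\<^sup>+x. ennreal (ln (g x)) \<partial>F) - enn2real (\<integral>\<^sup>+x. ennreal (- ln (g x)) \<partial>F)"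
    by (rule real_lebesgue_integral_def[OF assms(2)])
  have f1: "(\<integral>\<^sup>+x. ennreal (ln (g x)) \<partial>F) < \<infinity>" "(\<integral>\<^sup>+x. ennreal (- ln (g x)) \<partial>F) < \<infinity>"
    using integrableD[OF assms(2)] by (auto simp: less_top)
  have "log_integral F g = ereal (\<integral>x. ln (g x) \<partial>F)"
  proof -
    have "enn2ereal (\<integral>\<^sup>+x. ennreal (ln (g x)) \<partial>F) = ereal (enn2real (\<integral>\<^sup>+x. ennreal (ln (g x)) \<partial>F))"
      using f1(1) by (rule enn2ereal_fin)
    moreover have "enn2ereal (\<integral>\<^sup>+x. ennreal (- ln (g x)) \<partial>F) = ereal (enn2real (\<integral>\<^sup>+x. ennreal (- ln (g x)) \<partial>F))"
      using f1(2) by (rule enn2ereal_fin)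
    ultimately show ?thesis unfolding log_integral_def P_eq[OF assms(1)] I by simp
  qed
  then show ?thesis by (simp add: ext_exp_def)
qed

lemma P_fin:
  assumes "integrable F g" "g \<in> borel_measurable F"
  shows "(\<integral>\<^sup>+x. (if 0 < g x then ennreal (ln (g x)) else 0) \<partial>F) < \<infinity>"
proof -
  have "(\<integral>\<^sup>+x. (if 0 < g x then ennreal (ln (g x)) else 0) \<partial>F) \<le> (\<integral>\<^sup>+x. ennreal (norm (g x)) \<partial>F)"
  proof (rule nn_integral_mono)
    fix x show "(if 0 < g x then ennreal (ln (g x)) else 0) \<le> ennreal (norm (g x))"
      using ln_le_minus_one[of "g x"] by (auto intro!: ennreal_leI)
  qed
  also have "\<dots> < \<infinity>" using assms(1) by (simp add: integrable_iff_bounded)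
  finally show ?thesis .
qed

lemma log_int_pos:
  assumes "integrable F g" "g \<in> borel_measurable F" "ext_exp (log_integral F g) \<noteq> 0"
  shows "AE x in F. 0 < g x" "integrable F (\<lambda>x. ln (g x))"
proof -
  let ?P = "(\<integral>\<^sup>+x. (if 0 < g x then ennreal (ln (g x)) else 0) \<partial>F)"
  let ?N = "(\<integral>\<^sup>+x. (if 0 < g x then ennreal (- ln (g x)) else \<infinity>) \<partial>F)"
  have Pf: "?P < \<infinity>" by (rule P_fin[OF assms(1,2)])
  have Nf: "?N \<noteq> \<infinity>"
  proof
    assume "?N = \<infinity>"
    then have "log_integral F g = - \<infinity>"
    proof -
      have "enn2ereal ?P = ereal (enn2real ?P)" using Pf by (rule enn2ereal_fin)
      then show ?thesis using \<open>?N = \<infinity>\<close> by (simp add: log_integral_def)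
    qed
    then show False using assms(3) by (simp add: ext_exp_def)
  qed
  have "AE x in F. (if 0 < g x then ennreal (- ln (g x)) else \<infinity>) \<noteq> \<infinity>"
    by (rule nn_integral_PInf_AE[OF _ Nf]) (use assms(2) in measurable)
  then show ae: "AE x in F. 0 < g x" by (auto elim: AE_mp)
  show "integrable F (\<lambda>x. ln (g x))"
    unfolding real_integrable_def
    using Pf Nf P_eq[OF ae] assms(2) by auto
qed


lemma ext_exp_nonneg: "0 \<le> ext_exp e"
  by (simp add: ext_exp_def)

lemma log_int_lower:
  assumes "integrable F g" "g \<in> borel_measurable F" "AE x in F. 0 < g x"
    "integrable F h" "AE x in F. h x \<le> ln (g x)"
  shows "exp (\<integral>x. h x \<partial>F) \<le> ext_exp (log_integral F g)"
proof -
  have i1: "integrable F (\<lambda>x. \<bar>g x\<bar> + \<bar>h x\<bar>)" using assms(1,4) by auto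
  have m1: "(\<lambda>x. ln (g x)) \<in> borel_measurable F" using assms(2) by measurable
  have a1: "AE x in F. norm (ln (g x)) \<le> norm (\<bar>g x\<bar> + \<bar>h x\<bar>)"
    using assms(3,5)
  proof (eventually_elim)
    case (elim x)
    then show ?case using ln_le_minus_one[of "g x"] by auto
  qed
  have li: "integrable F (\<lambda>x. ln (g x))" by (rule Bochner_Integration.integrable_bound[OF i1 m1 a1])
  have "(\<integral>x. h x \<partial>F) \<le> (\<integral>x. ln (g x) \<partial>F)"
    by (rule integral_mono_AE[OF assms(4) li assms(5)])
  then show ?thesis using log_int_eq[OF assms(3) li] by simp
qed

lemma one_side:
  assumes P: "prob_space F"
    and U: "integrable F U" "U \<in> borel_measurable F" "\<And>x. 0 \<le> U x"
    and V: "integrable F V" "V \<in> borel_measurable F" "\<And>x. 0 \<le> V x"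
    and u: "0 < u" "0 \<le> v" and nz: "ext_exp (log_integral F U) \<noteq> 0"
  shows "u * ext_exp (log_integral F U) \<le> ext_exp (log_integral F (\<lambda>x. u * U x + v * V x))"
proof -
  interpret prob_space F by (rule P)
  have ae: "AE x in F. 0 < U x" and li: "integrable F (\<lambda>x. ln (U x))"
    using log_int_pos[OF U(1,2) nz] by auto
  have eq: "ext_exp (log_integral F U) = exp (\<integral>x. ln (U x) \<partial>F)" by (rule log_int_eq[OF ae li])
  have "exp (\<integral>x. ln u + ln (U x) \<partial>F) \<le> ext_exp (log_integral F (\<lambda>x. u * U x + v * V x))"
  proof (rule log_int_lower)
    show "integrable F (\<lambda>x. u * U x + v * V x)" using U V by auto
    show "(\<lambda>x. u * U x + v * V x) \<in> borel_measurable F" using U V by measurable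
    show "AE x in F. 0 < u * U x + v * V x" using ae
    proof eventually_elim
      case (elim x) then show ?case using V(3)[of x] u by (simp add: add_pos_nonneg)
    qed
    show "integrable F (\<lambda>x. ln u + ln (U x))" using li by auto
    show "AE x in F. ln u + ln (U x) \<le> ln (u * U x + v * V x)" using ae
    proof eventually_elim
      case (elim x)
      have "ln u + ln (U x) = ln (u * U x)" using elim u by (simp add: ln_mult)
      also have "\<dots> \<le> ln (u * U x + v * V x)" using elim u V(3)[of x]
        by (subst ln_le_cancel_iff) (auto intro: add_pos_nonneg)
      finally show ?case .
    qed
  qed
  also have "exp (\<integral>x. ln u + ln (U x) \<partial>F) = u * ext_exp (log_integral F U)"
    using li u by (simp add: eq exp_add prob_space)
  finally show ?thesis by simp
qed


lemma ln_conc: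
  fixes l X Y :: real
  assumes "0 < l" "l < 1" "0 < X" "0 < Y"
  shows "l * ln X + (1 - l) * ln Y \<le> ln (l * X + (1 - l) * Y)"
  using concave_onD[OF ln_concave, of "1 - l" X Y] assms by simp

lemma both_side:
  assumes P: "prob_space F"
    and U: "integrable F U" "U \<in> borel_measurable F" "\<And>x. 0 \<le> U x"
    and V: "integrable F V" "V \<in> borel_measurable F" "\<And>x. 0 \<le> V x"
    and u: "0 < u" "0 < v" and nzU: "ext_exp (log_integral F U) \<noteq> 0"
    and nzV: "ext_exp (log_integral F V) \<noteq> 0"
  shows "u * ext_exp (log_integral F U) + v * ext_exp (log_integral F V)
     \<le> ext_exp (log_integral F (\<lambda>x. u * U x + v * V x))"
proof -
  interpret prob_space F by (rule P)
  have aeU: "AE x in F. 0 < U x" and liU: "integrable F (\<lambda>x. ln (U x))"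
    using log_int_pos[OF U(1,2) nzU] by auto
  have aeV: "AE x in F. 0 < V x" and liV: "integrable F (\<lambda>x. ln (V x))"
    using log_int_pos[OF V(1,2) nzV] by auto
  define IU where "IU = (\<integral>x. ln (U x) \<partial>F)"
  define IV where "IV = (\<integral>x. ln (V x) \<partial>F)"
  have eqU: "ext_exp (log_integral F U) = exp IU" unfolding IU_def by (rule log_int_eq[OF aeU liU])
  have eqV: "ext_exp (log_integral F V) = exp IV" unfolding IV_def by (rule log_int_eq[OF aeV liV])
  define A where "A = u * exp IU"
  define B where "B = v * exp IV"
  have A: "0 < A" and B: "0 < B" using u by (auto simp: A_def B_def)
  define l where "l = A / (A + B)"
  have l: "0 < l" "l < 1" using A B by (auto simp: l_def field_simps)
  have l1: "1 - l = B / (A + B)" using A B by (simp add: l_def field_simps)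
  define c where "c = l * (ln u - ln l) + (1 - l) * (ln v - ln (1 - l))"
  have key: "c + l * IU + (1 - l) * IV = ln (A + B)"
  proof -
    have "c + l * IU + (1 - l) * IV = l * (ln A - ln l) + (1 - l) * (ln B - ln (1 - l))"
      unfolding c_def A_def B_def using u by (simp add: ln_mult algebra_simps)
    also have "ln A - ln l = ln (A + B)" using A B l by (simp add: l_def ln_div)
    also have "ln B - ln (1 - l) = ln (A + B)" using A B l by (simp add: l1 ln_div)
    finally show ?thesis by (simp add: algebra_simps)
  qed
  have "exp (\<integral>x. c + l * ln (U x) + (1 - l) * ln (V x) \<partial>F)
      \<le> ext_exp (log_integral F (\<lambda>x. u * U x + v * V x))"
  proof (rule log_int_lower)
    show "integrable F (\<lambda>x. u * U x + v * V x)" using U V by auto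
    show "(\<lambda>x. u * U x + v * V x) \<in> borel_measurable F" using U V by measurable
    show "AE x in F. 0 < u * U x + v * V x" using aeU
    proof eventually_elim
      case (elim x) then show ?case using V(3)[of x] u by (simp add: add_pos_nonneg)
    qed
    show "integrable F (\<lambda>x. c + l * ln (U x) + (1 - l) * ln (V x))" using liU liV by auto
    show "AE x in F. c + l * ln (U x) + (1 - l) * ln (V x) \<le> ln (u * U x + v * V x)"
      using aeU aeV
    proof eventually_elim
      case (elim x)
      have X: "0 < u * U x / l" using elim u l by simp
      have Y: "0 < v * V x / (1 - l)" using elim u l by simp
      have e1: "ln (u * U x / l) = ln u + ln (U x) - ln l" using elim u l by (simp add: ln_div ln_mult)
      have e2: "ln (v * V x / (1 - l)) = ln v + ln (V x) - ln (1 - l)" using elim u l by (simp add: ln_div ln_mult)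
      have e3: "l * (u * U x / l) + (1 - l) * (v * V x / (1 - l)) = u * U x + v * V x" using l by simp
      have "c + l * ln (U x) + (1 - l) * ln (V x) = l * ln (u * U x / l) + (1 - l) * ln (v * V x / (1 - l))"
        unfolding e1 e2 c_def by (simp add: algebra_simps)
      also have "\<dots> \<le> ln (u * U x + v * V x)" using ln_conc[OF l X Y] e3 by simp
      finally show ?case .
    qed
  qed
  also have "(\<integral>x. c + l * ln (U x) + (1 - l) * ln (V x) \<partial>F) = c + l * IU + (1 - l) * IV"
    using liU liV by (simp add: IU_def IV_def prob_space)
  finally show ?thesis using key A B by (simp add: eqU eqV A_def B_def)
qed


lemma mix_ineq:
  assumes P: "prob_space F"
    and U: "integrable F U" "U \<in> borel_measurable F" "\<And>x. 0 \<le> U x"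
    and V: "integrable F V" "V \<in> borel_measurable F" "\<And>x. 0 \<le> V x"
    and u: "0 \<le> u" "0 \<le> v" "u + v = 1"
  shows "u * ext_exp (log_integral F U) + v * ext_exp (log_integral F V)
     \<le> ext_exp (log_integral F (\<lambda>x. u * U x + v * V x))"
proof (cases "u = 0 \<or> v = 0")
  case True
  then show ?thesis using u by auto
next
  case False
  then have up: "0 < u" "0 < v" using u by auto
  consider "ext_exp (log_integral F U) = 0" "ext_exp (log_integral F V) = 0"
    | "ext_exp (log_integral F U) \<noteq> 0" "ext_exp (log_integral F V) = 0"
    | "ext_exp (log_integral F U) = 0" "ext_exp (log_integral F V) \<noteq> 0"
    | "ext_exp (log_integral F U) \<noteq> 0" "ext_exp (log_integral F V) \<noteq> 0" by blast
  then show ?thesis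
  proof cases
    case 1 then show ?thesis by (simp add: ext_exp_nonneg)
  next
    case 2 then show ?thesis using one_side[OF P U V up(1) u(2)] by simp
  next
    case 3
    have "v * ext_exp (log_integral F V) \<le> ext_exp (log_integral F (\<lambda>x. v * V x + u * U x))"
      using one_side[OF P V U up(2) u(1)] 3 by simp
    also have "(\<lambda>x. v * V x + u * U x) = (\<lambda>x. u * U x + v * V x)" by (simp add: add.commute)
    finally show ?thesis using 3 by simp
  next
    case 4 then show ?thesis using both_side[OF P U V up] by simp
  qed
qed

theorem lemmaD8:
  fixes F :: "real measure" and a b :: "real \<Rightarrow> real" and r :: real
  assumes "game a F" and "game b F"
  shows "concave_on {0..1}
           (\<lambda>p. ext_exp (log_integral F (\<lambda>x. p * a x + (1 - p) * b x)) / exp r)"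
proof -
  have P: "prob_space F" and am: "a \<in> borel_measurable F" and a0: "\<And>x. 0 \<le> a x"
    and ai: "integrable F a" using assms(1) by (auto simp: game_def)
  have bm: "b \<in> borel_measurable F" and b0: "\<And>x. 0 \<le> b x"
    and bi: "integrable F b" using assms(2) by (auto simp: game_def)
  define G where "G p = (\<lambda>x. p * a x + (1 - p) * b x)" for p :: real
  have Gi: "integrable F (G p)" for p unfolding G_def using ai bi by auto
  have Gm: "G p \<in> borel_measurable F" for p unfolding G_def using am bm by measurable
  have G0: "0 \<le> G p x" if "p \<in> {0..1}" for p x
    unfolding G_def using that a0[of x] b0[of x] by (auto intro!: add_nonneg_nonneg mult_nonneg_nonneg)
  have main: "\<forall>x\<in>{0..1}. \<forall>y\<in>{0..1}. \<forall>u\<ge>0. \<forall>v\<ge>0. u + v = 1 \<longrightarrow>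
     u * (ext_exp (log_integral F (G x)) / exp r) + v * (ext_exp (log_integral F (G y)) / exp r)
       \<le> ext_exp (log_integral F (G (u *\<^sub>R x + v *\<^sub>R y))) / exp r"
  proof (intro ballI allI impI)
    fix x y u v :: real
    assume x: "x \<in> {0..1}" and y: "y \<in> {0..1}" and u: "0 \<le> u" "0 \<le> v" "u + v = 1"
    have vv: "v = 1 - u" using u(3) by simp
    have GG: "G (u *\<^sub>R x + v *\<^sub>R y) = (\<lambda>z. u * G x z + v * G y z)"
      by (rule ext) (simp add: G_def vv algebra_simps)
    have "u * ext_exp (log_integral F (G x)) + v * ext_exp (log_integral F (G y))
       \<le> ext_exp (log_integral F (G (u *\<^sub>R x + v *\<^sub>R y)))"
      unfolding GG by (rule mix_ineq[OF P Gi Gm G0[OF x] Gi Gm G0[OF y] u])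
    then have "(u * ext_exp (log_integral F (G x)) + v * ext_exp (log_integral F (G y))) / exp r
       \<le> ext_exp (log_integral F (G (u *\<^sub>R x + v *\<^sub>R y))) / exp r"
      by (rule divide_right_mono) simp
    then show "u * (ext_exp (log_integral F (G x)) / exp r) + v * (ext_exp (log_integral F (G y)) / exp r)
       \<le> ext_exp (log_integral F (G (u *\<^sub>R x + v *\<^sub>R y))) / exp r"
      by (simp add: add_divide_distrib)
  qed
  then show ?thesis unfolding concave_on_iff G_def using convex_real_interval(5) by blast
qed

end
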